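(* Let $m\ge2$, $n\ge1$, $f_i:\mathbb{R}^n\to\mathbb{R}$ smooth, each with $L^g_{f_i}$-Lipschitz gradient and $L^H_{f_i}$-Lipschitz Hessian; let $\sigma>0$. Fix $\boldsymbol\theta^0$, let $\Psi_{\boldsymbol\theta^0}(\mathbf{x})=F(\boldsymbol\theta^0+\sqrt{\hat{\mathbf{L}}}\mathbf{x})$ and $\mathbf{x}^0\in\mathbb{R}^{mn}$. Given $\rho\ge1$, let $\alpha=\frac{1}{L^g_\Psi\rho^7}$, $d=\frac{\sigma}{20L^H_\Psi\rho^2}$, $r=\lceil\rho/\sqrt\alpha\rceil$ and $\ell_s=\frac{d^2}{4\alpha r}-2mn\alpha\sigma^2(r+\sqrt{r\rho}+\rho)$. If $\{\mathbf{y}^k\},\{\mathbf{z}^k\}$ are coupling sequences, then for any $t_0\ge0$, $$\mathbb{P}\big[\mathcal{E}_A^{t_0,r}\cup\mathcal{E}_B^{t_0,r}\big]\ge1-8re^{-\rho},$$ where $\mathcal{E}_A^{t_0,r}=\{\exists\tau\in(0,r]:\ \min\{\Psi_{\boldsymbol\theta^0}(\mathbf{y}^{t_0+\tau})-\Psi_{\boldsymbol\theta^0}(\mathbf{y}^{t_0}),\ \Psi_{\boldsymbol\theta^0}(\mathbf{z}^{t_0+\tau})-\Psi_{\boldsymbol\theta^0}(\mathbf{z}^{t_0})\}\le-\ell_s\}$ and $\mathcal{E}_B^{t_0,r}=\{\forall\tau\in(0,r]:\ \max\{\|\mathbf{y}^{t_0+\tau}-\mathbf{y}^{t_0}\|,\|\mathbf{z}^{t_0+\tau}-\mathbf{z}^{t_0}\|\}\le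 d\}$.
   Context: $F(\boldsymbol\theta)=\sum_{i=1}^mf_i(\boldsymbol\theta_i)$. $\mathbf{L}$ is the Laplacian of an undirected graph on $\{1,\dots,m\}$, $\sqrt{\mathbf{L}}$ its unique symmetric positive semidefinite square root, $\sqrt{\hat{\mathbf{L}}}=\sqrt{\mathbf{L}}\otimes\mathbf{I}_n$. $L^g_\Psi=\|\sqrt{\mathbf{L}}\|^2\max_iL^g_{f_i}$, $L^H_\Psi=\|\sqrt{\mathbf{L}}\|^3\max_iL^H_{f_i}$. Let $\mathbf{e}_\alpha$ be a unit eigenvector of $\nabla^2\Psi_{\boldsymbol\theta^0}(\mathbf{x}^0)$ for its minimum eigenvalue. Coupling sequences: $\mathbf{y}^0=\mathbf{z}^0=\mathbf{x}^0$, $\mathbf{y}^{k+1}=\mathbf{y}^k-\alpha(\nabla\Psi_{\boldsymbol\theta^0}(\mathbf{y}^k)+\mathbf{n}^k_{\mathbf{y}})$, $\mathbf{z}^{k+1}=\mathbf{z}^k-\alpha(\nabla\Psi_{\boldsymbol\theta^0}(\mathbf{z}^k)+\mathbf{n}^k_{\mathbf{z}})$, where each of $\{\mathbf{n}^k_{\mathbf{y}}\}$, $\{\mathbf{n}^k_{\mathbf{z}}\}$ is independent over $k$ with law $\mathcal{N}(\mathbf{0},\sigma^2\mathbf{I}_{mn})$, and for all $k$: $\mathbf{n}^k_{\mathbf{y}}-\mathbf{n}^k_{\mathbf{z}}\in\mathrm{span}(\mathbf{e}_\alpha)$ and $\mathbf{e}_\alpha^\top\mathbf{n}^k_{\mathbf{y}}=-\mathbf{e}_\alpha^\top\mathbf{n}^k_{\mathbf{z}}$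 (the two sequences share a common source of randomness). *)

theory Defs
  imports "HOL-Analysis.Analysis" "HOL-Probability.Probability"
begin

fun ddir :: "('a::real_normed_vector) list \<Rightarrow> ('a \<Rightarrow> real) \<Rightarrow> 'a \<Rightarrow> real" where
  "ddir [] f = f"
| "ddir (v # vs) f = (\<lambda>x. frechet_derivative (ddir vs f) (at x) v)"

definition smooth_fun :: "('a::real_normed_vector \<Rightarrow> real) \<Rightarrow> bool" where
  "smooth_fun f \<longleftrightarrow> (\<forall>vs x. ddir vs f differentiable (at x))"

definition graph_laplacian :: "('m::finite \<Rightarrow> 'm \<Rightarrow> bool) \<Rightarrow> real^'m^'m" where
  "graph_laplacian E = (\<chi> i j. if i = j then real (card {k. E i k}) else if E i j then -1 else 0)"

(* (S \<otimes> I_n) x  for x \<in> R^{mn} viewed as m blocks of length n *)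
definition kron_id :: "real^'m^'m \<Rightarrow> real^'n^'m \<Rightarrow> real^'n^'m" where
  "kron_id S x = (\<chi> i. \<Sum>j\<in>UNIV. (S $ i $ j) *\<^sub>R (x $ j))"

definition gauss :: "real \<Rightarrow> (real^'n^'m) measure" where
  "gauss \<sigma> = density lborel (\<lambda>x. ennreal (\<Prod>i\<in>UNIV. \<Prod>j\<in>UNIV. normal_density 0 \<sigma> (x $ i $ j)))"

end

theory Submission
  imports Defs
begin



lemma norm_sum_sq_le:
  fixes v :: "nat \<Rightarrow> 'v::real_normed_vector"
  shows "(norm (\<Sum>k<n. v k))\<^sup>2 \<le> real n * (\<Sum>k<n. (norm (v k))\<^sup>2)"
proof -
  have "norm (\<Sum>k<n. v k) \<le> (\<Sum>k<n. 1 * norm (v k))" using norm_sum by simp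
  hence "(norm (\<Sum>k<n. v k))\<^sup>2 \<le> (\<Sum>k<n. 1 * norm (v k))\<^sup>2"
    by (simp add: power_mono)
  also have "\<dots> \<le> (\<Sum>k<n. 1\<^sup>2) * (\<Sum>k<n. (norm (v k))\<^sup>2)"
    by (rule Cauchy_Schwarz_ineq_sum)
  finally show ?thesis by simp
qed

lemma det_chain:
  fixes \<Psi> :: "'v::real_inner \<Rightarrow> real" and g :: "'v \<Rightarrow> 'v" and u w :: "nat \<Rightarrow> 'v"
  assumes desc: "\<And>a b. \<Psi> b \<le> \<Psi> a + g a \<bullet> (b - a) + L/2 * (norm (b-a))\<^sup>2"
    and \<alpha>: "0 < \<alpha>" "L * \<alpha> \<le> 1" "0 \<le> L"
    and step: "\<And>k. u (Suc k) = u k - \<alpha> *\<^sub>R (g (u k) + w k)"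
    and noA: "\<forall>\<tau>\<in>{1..r}. \<Psi> (u \<tau>) - \<Psi> (u 0) > - ls"
    and W: "(\<Sum>k<r. (norm (w k))\<^sup>2) \<le> B"
    and \<tau>: "\<tau> \<in> {1..r}"
  shows "(norm (u \<tau> - u 0))\<^sup>2 \<le> 4*\<alpha>*r*ls + 4*\<alpha>\<^sup>2*r*B"
proof -
  have sd: "\<Psi> (u (Suc k)) \<le> \<Psi> (u k) + \<alpha>/2 * ((norm (w k))\<^sup>2 - (norm (g (u k)))\<^sup>2)" for k
  proof -
    let ?g = "g (u k)" and ?w = "w k"
    have "\<Psi> (u (Suc k)) \<le> \<Psi> (u k) + ?g \<bullet> (- (\<alpha> *\<^sub>R (?g + ?w))) + L/2 * (norm (- (\<alpha> *\<^sub>R (?g + ?w))))\<^sup>2"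
      using desc[where a="u k" and b="u (Suc k)"] by (simp add: step)
    also have "(norm (- (\<alpha> *\<^sub>R (?g + ?w))))\<^sup>2 = \<alpha>\<^sup>2 * (norm (?g + ?w))\<^sup>2"
      using \<alpha> by (simp add: power_mult_distrib)
    also have "L/2 * (\<alpha>\<^sup>2 * (norm (?g + ?w))\<^sup>2) \<le> \<alpha>/2 * (norm (?g + ?w))\<^sup>2"
    proof -
      have "L * \<alpha>\<^sup>2 \<le> \<alpha>" using \<alpha> by (simp add: power2_eq_square mult_right_le_one_le)
      hence "L * \<alpha>\<^sup>2 * (norm (?g + ?w))\<^sup>2 \<le> \<alpha> * (norm (?g + ?w))\<^sup>2"
        by (intro mult_right_mono) auto
      thus ?thesis by (simp add: algebra_simps)
    qed
    finally have "\<Psi> (u (Suc k)) \<le> \<Psi> (u k) + ?g \<bullet> (- (\<alpha> *\<^sub>R (?g + ?w))) + \<alpha>/2 * (norm (?g + ?w))\<^sup>2"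
      by simp
    moreover have "?g \<bullet> (- (\<alpha> *\<^sub>R (?g + ?w))) + \<alpha>/2 * (norm (?g + ?w))\<^sup>2
        = \<alpha>/2 * ((norm ?w)\<^sup>2 - (norm ?g)\<^sup>2)"
      by (simp only: power2_norm_eq_inner inner_add_left inner_add_right inner_commute inner_minus_right inner_scaleR_right) (simp add: algebra_simps inner_commute)
    ultimately show ?thesis by linarith
  qed
  have sum_d: "\<Psi> (u n) - \<Psi> (u 0) \<le> \<alpha>/2 * ((\<Sum>k<n. (norm (w k))\<^sup>2) - (\<Sum>k<n. (norm (g (u k)))\<^sup>2))" for n
  proof (induction n)
    case 0 then show ?case by simp
  next
    case (Suc n) then show ?case using sd[of n] by (simp add: algebra_simps)
  qed
  have disp: "u n - u 0 = - (\<alpha> *\<^sub>R (\<Sum>k<n. g (u k) + w k))" for n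
  proof (induction n)
    case 0 then show ?case by simp
  next
    case (Suc n) then show ?case by (simp add: step algebra_simps scaleR_add_right)
  qed
  define G where "G = (\<Sum>k<\<tau>. (norm (g (u k)))\<^sup>2)"
  define Wt where "Wt = (\<Sum>k<\<tau>. (norm (w k))\<^sup>2)"
  have G0: "0 \<le> G" unfolding G_def by (simp add: sum_nonneg)
  have Wt0: "0 \<le> Wt" unfolding Wt_def by (simp add: sum_nonneg)
  have WtB: "Wt \<le> B"
  proof -
    have "Wt \<le> (\<Sum>k<r. (norm (w k))\<^sup>2)" unfolding Wt_def
      using \<tau> by (intro sum_mono2) auto
    thus ?thesis using W by simp
  qed
  have key: "\<alpha> * G < 2 * ls + \<alpha> * Wt"
  proof -
    have "\<Psi> (u \<tau>) - \<Psi> (u 0) > - ls" using noA \<tau> by blast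
    moreover have "\<Psi> (u \<tau>) - \<Psi> (u 0) \<le> \<alpha>/2 * (Wt - G)" using sum_d[of \<tau>] unfolding G_def Wt_def .
    ultimately have "- ls < \<alpha>/2 * (Wt - G)" by linarith
    thus ?thesis by (simp add: algebra_simps)
  qed
  have "(norm (u \<tau> - u 0))\<^sup>2 = \<alpha>\<^sup>2 * (norm (\<Sum>k<\<tau>. g (u k) + w k))\<^sup>2"
    using \<alpha> by (simp add: disp power_mult_distrib)
  also have "\<dots> \<le> \<alpha>\<^sup>2 * (real \<tau> * (\<Sum>k<\<tau>. (norm (g (u k) + w k))\<^sup>2))"
    by (intro mult_left_mono norm_sum_sq_le) auto
  also have "(\<Sum>k<\<tau>. (norm (g (u k) + w k))\<^sup>2) \<le> (\<Sum>k<\<tau>. 2 * (norm (g (u k)))\<^sup>2 + 2 * (norm (w k))\<^sup>2)"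
  proof (intro sum_mono)
    fix k
    have "(norm (g (u k) + w k))\<^sup>2 \<le> (norm (g (u k)) + norm (w k))\<^sup>2"
      by (intro power_mono norm_triangle_ineq) auto
    also have "\<dots> \<le> 2 * (norm (g (u k)))\<^sup>2 + 2 * (norm (w k))\<^sup>2"
    proof -
      have "0 \<le> (norm (g (u k)) - norm (w k))\<^sup>2" by simp
      thus ?thesis unfolding power2_diff power2_sum by linarith
    qed
    finally show "(norm (g (u k) + w k))\<^sup>2 \<le> 2 * (norm (g (u k)))\<^sup>2 + 2 * (norm (w k))\<^sup>2" .
  qed
  hence "\<alpha>\<^sup>2 * (real \<tau> * (\<Sum>k<\<tau>. (norm (g (u k) + w k))\<^sup>2)) \<le> \<alpha>\<^sup>2 * (real \<tau> * (2*G + 2*Wt))"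
    by (intro mult_left_mono) (auto simp: G_def Wt_def sum.distrib sum_distrib_left)
  also have "\<alpha>\<^sup>2 * (real \<tau> * (2*G + 2*Wt)) = 2 * \<alpha> * real \<tau> * (\<alpha> * G) + 2*\<alpha>\<^sup>2*real \<tau> * Wt"
    by (simp add: power2_eq_square algebra_simps)
  also have "\<dots> \<le> 2 * \<alpha> * real \<tau> * (2 * ls + \<alpha> * Wt) + 2*\<alpha>\<^sup>2*real \<tau> * Wt"
    using key \<alpha> by (intro add_right_mono mult_left_mono) auto
  also have "\<dots> = 4*\<alpha>*real \<tau>*ls + 4*\<alpha>\<^sup>2*real \<tau>*Wt"
    by (simp add: power2_eq_square algebra_simps)
  also have "\<dots> \<le> 4*\<alpha>*real r*ls + 4*\<alpha>\<^sup>2*real r*Wt"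
  proof -
    have p: "0 \<le> ls + \<alpha> * Wt" using key G0 \<alpha> Wt0
    proof -
      have "0 \<le> \<alpha> * G" using G0 \<alpha> by simp
      moreover have "0 \<le> \<alpha> * Wt" using Wt0 \<alpha> by simp
      ultimately show ?thesis using key by linarith
    qed
    have "0 \<le> 4*\<alpha>*(real r - real \<tau>)*(ls + \<alpha> * Wt)"
      using \<tau> \<alpha> p by (intro mult_nonneg_nonneg) auto
    thus ?thesis by (simp add: power2_eq_square algebra_simps)
  qed
  also have "\<dots> \<le> 4*\<alpha>*real r*ls + 4*\<alpha>\<^sup>2*real r*B"
    using WtB by (intro add_left_mono mult_left_mono) auto
  finally show ?thesis .
qed




lemma descent:
  fixes \<Psi> :: "'v::real_inner \<Rightarrow> real"
  assumes grad: "\<And>x. (\<Psi> has_derivative (\<lambda>h. g x \<bullet> h)) (at x)"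
    and lip: "\<And>x y. norm (g x - g y) \<le> L * norm (x - y)"
  shows "\<Psi> b \<le> \<Psi> a + g a \<bullet> (b - a) + L/2 * (norm (b-a))\<^sup>2"
proof -
  define v where "v = b - a"
  define \<phi> where "\<phi> t = \<Psi> (a + t *\<^sub>R v) - t * (g a \<bullet> v) - L/2 * t\<^sup>2 * (norm v)\<^sup>2" for t
  have "\<phi> 1 \<le> \<phi> 0"
  proof (rule DERIV_nonpos_imp_nonincreasing[of 0 1])
    fix t :: real assume t: "0 \<le> t" "t \<le> 1"
    have d1: "((\<lambda>t. a + t *\<^sub>R v) has_derivative (\<lambda>h. h *\<^sub>R v)) (at t)"
      by (auto intro!: derivative_eq_intros)
    have "((\<lambda>t. \<Psi> (a + t *\<^sub>R v)) has_derivative (\<lambda>h. g (a + t *\<^sub>R v) \<bullet> (h *\<^sub>R v))) (at t)"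
      using has_derivative_compose[OF d1 grad[of "a + t *\<^sub>R v"]] by simp
    moreover have "(\<lambda>h. g (a + t *\<^sub>R v) \<bullet> (h *\<^sub>R v)) = (*) (g (a + t *\<^sub>R v) \<bullet> v)"
      by (auto simp: fun_eq_iff)
    ultimately have dpsi: "((\<lambda>t. \<Psi> (a + t *\<^sub>R v)) has_real_derivative (g (a + t *\<^sub>R v) \<bullet> v)) (at t)"
      by (simp add: has_field_derivative_def)
    have "(\<phi> has_real_derivative (g (a + t *\<^sub>R v) \<bullet> v - g a \<bullet> v - L/2 * (2 * t) * (norm v)\<^sup>2)) (at t)"
      unfolding \<phi>_def
      by (intro DERIV_diff dpsi DERIV_cmult_right DERIV_cmult DERIV_ident) (auto intro!: derivative_eq_intros)
    moreover have "g (a + t *\<^sub>R v) \<bullet> v - g a \<bullet> v - L/2 * (2 * t) * (norm v)\<^sup>2 \<le> 0"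
    proof -
      have "g (a + t *\<^sub>R v) \<bullet> v - g a \<bullet> v = (g (a + t *\<^sub>R v) - g a) \<bullet> v" by (simp add: inner_diff_left)
      also have "\<dots> \<le> norm (g (a + t *\<^sub>R v) - g a) * norm v" by (rule Cauchy_Schwarz_ineq2[THEN order_trans[OF abs_ge_self]])
      also have "\<dots> \<le> L * norm (t *\<^sub>R v) * norm v" using lip[of "a + t *\<^sub>R v" a] by (intro mult_right_mono) auto
      also have "\<dots> = L * t * (norm v)\<^sup>2" using t by (simp add: power2_eq_square)
      finally show ?thesis by simp
    qed
    ultimately show "\<exists>y. (\<phi> has_real_derivative y) (at t) \<and> y \<le> 0" by blast
  qed auto
  thus ?thesis by (simp add: \<phi>_def v_def)
qed




lemma norm_vec_sq: "(norm (x::'a::real_normed_vector^'k))\<^sup>2 = (\<Sum>i\<in>UNIV. (norm (x$i))\<^sup>2)"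
  by (simp add: norm_vec_def L2_set_def sum_nonneg)

lemma kron_linear: "linear (kron_id S)"
  by (rule linearI) (simp_all add: kron_id_def vec_eq_iff sum.distrib scaleR_add_right scaleR_sum_right mult_ac)

lemma kron_bl: "bounded_linear (kron_id S)"
  using kron_linear linear_conv_bounded_linear by blast

lemma kron_comp: "kron_id S x $ i $ l = (S *v (\<chi> j. x $ j $ l)) $ i"
  by (simp add: kron_id_def matrix_vector_mult_def)

lemma kron_norm:
  fixes S :: "real^'m^'m" and x :: "real^'n^'m"
  shows "norm (kron_id S x) \<le> onorm (\<lambda>v. S *v v) * norm x"
proof -
  let ?s = "onorm (\<lambda>v::real^'m. S *v v)"
  have s0: "0 \<le> ?s" by (rule onorm_pos_le[OF matrix_vector_mul_bounded_linear])
  have "(norm (kron_id S x))\<^sup>2 = (\<Sum>i\<in>UNIV. \<Sum>l\<in>UNIV. ((S *v (\<chi> j. x $ j $ l)) $ i)\<^sup>2)"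
    by (simp add: norm_vec_sq kron_comp)
  also have "\<dots> = (\<Sum>l\<in>UNIV. (norm (S *v (\<chi> j. x $ j $ l)))\<^sup>2)"
    by (subst sum.swap) (simp add: norm_vec_sq)
  also have "\<dots> \<le> (\<Sum>l\<in>UNIV. ?s\<^sup>2 * (norm (\<chi> j. x $ j $ l))\<^sup>2)"
  proof (intro sum_mono)
    fix l
    have "norm (S *v (\<chi> j. x $ j $ l)) \<le> ?s * norm (\<chi> j. x $ j $ l)"
      by (rule onorm[OF matrix_vector_mul_bounded_linear])
    hence "(norm (S *v (\<chi> j. x $ j $ l)))\<^sup>2 \<le> (?s * norm (\<chi> j. x $ j $ l))\<^sup>2"
      by (intro power_mono) auto
    thus "(norm (S *v (\<chi> j. x $ j $ l)))\<^sup>2 \<le> ?s\<^sup>2 * (norm (\<chi> j. x $ j $ l))\<^sup>2"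
      by (simp add: power_mult_distrib)
  qed
  also have "\<dots> = ?s\<^sup>2 * (norm x)\<^sup>2"
    by (simp add: norm_vec_sq sum_distrib_left[symmetric]) (subst sum.swap, simp)
  also have "\<dots> = (?s * norm x)\<^sup>2" by (simp add: power_mult_distrib)
  finally show ?thesis using s0 by (simp add: power2_le_iff_abs_le)
qed

lemma kron_sym:
  fixes S :: "real^'m^'m" and u h :: "real^'n^'m"
  assumes "transpose S = S"
  shows "kron_id S u \<bullet> h = u \<bullet> kron_id S h"
proof -
  have Ss: "S $ i $ j = S $ j $ i" for i j
    using assms unfolding transpose_def by (metis vec_lambda_beta)
  have "kron_id S u \<bullet> h = (\<Sum>i\<in>UNIV. \<Sum>j\<in>UNIV. S $ i $ j * (u $ j \<bullet> h $ i))"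
    by (simp add: kron_id_def inner_vec_def[of _ h] inner_sum_left)
  also have "\<dots> = (\<Sum>j\<in>UNIV. \<Sum>i\<in>UNIV. S $ j $ i * (u $ j \<bullet> h $ i))"
    by (subst sum.swap) (simp add: Ss)
  also have "\<dots> = u \<bullet> kron_id S h"
    by (simp add: kron_id_def inner_vec_def[of u] inner_sum_right)
  finally show ?thesis .
qed




lemma grad_formula:
  fixes S :: "real^'m^'m" and f :: "'m \<Rightarrow> real^'n \<Rightarrow> real" and gf :: "'m \<Rightarrow> real^'n \<Rightarrow> real^'n"
    and \<theta>0 :: "real^'n^'m" and \<Psi> :: "real^'n^'m \<Rightarrow> real" and g\<Psi> :: "real^'n^'m \<Rightarrow> real^'n^'m"
  assumes S_sym: "transpose S = S"
    and f_grad: "\<And>i x. (f i has_derivative (\<lambda>h. gf i x \<bullet> h)) (at x)"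
    and \<Psi>_def: "\<Psi> = (\<lambda>x. \<Sum>i\<in>UNIV. f i ((\<theta>0 + kron_id S x) $ i))"
    and \<Psi>_grad: "\<And>x. (\<Psi> has_derivative (\<lambda>h. g\<Psi> x \<bullet> h)) (at x)"
  shows "g\<Psi> x = kron_id S (\<chi> i. gf i ((\<theta>0 + kron_id S x) $ i))"
proof -
  define G where "G = (\<chi> i. gf i ((\<theta>0 + kron_id S x) $ i))"
  have inner_d: "((\<lambda>x. (\<theta>0 + kron_id S x) $ i) has_derivative (\<lambda>h. kron_id S h $ i)) (at x)" for i
  proof -
    have bl: "bounded_linear (\<lambda>h. kron_id S h $ i)"
      by (rule bounded_linear_compose[OF bounded_linear_vec_nth kron_bl])
    have "((\<lambda>x. \<theta>0 $ i + kron_id S x $ i) has_derivative (\<lambda>h. 0 + kron_id S h $ i)) (at x)"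
      by (intro has_derivative_add has_derivative_const bounded_linear.has_derivative[OF bl] has_derivative_ident)
    thus ?thesis by simp
  qed
  have "(\<Psi> has_derivative (\<lambda>h. \<Sum>i\<in>UNIV. gf i ((\<theta>0 + kron_id S x) $ i) \<bullet> kron_id S h $ i)) (at x)"
    unfolding \<Psi>_def
    by (intro has_derivative_sum has_derivative_compose[OF inner_d f_grad])
  moreover have "(\<lambda>h. \<Sum>i\<in>UNIV. gf i ((\<theta>0 + kron_id S x) $ i) \<bullet> kron_id S h $ i) = (\<lambda>h. kron_id S G \<bullet> h)"
  proof
    fix h
    have "G \<bullet> kron_id S h = (\<Sum>i\<in>UNIV. G $ i \<bullet> kron_id S h $ i)"
      by (rule inner_vec_def)
    thus "(\<Sum>i\<in>UNIV. gf i ((\<theta>0 + kron_id S x) $ i) \<bullet> kron_id S h $ i) = kron_id S G \<bullet> h"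
      by (simp add: kron_sym[OF S_sym] G_def)
  qed
  ultimately have "(\<lambda>h. g\<Psi> x \<bullet> h) = (\<lambda>h. kron_id S G \<bullet> h)"
    using has_derivative_unique[OF \<Psi>_grad[of x]] by simp
  hence "(g\<Psi> x - kron_id S G) \<bullet> (g\<Psi> x - kron_id S G) = 0"
    by (metis inner_diff_left diff_self)
  thus ?thesis unfolding G_def by simp
qed

lemma grad_lip_lemma:
  fixes S :: "real^'m^'m" and gf :: "'m \<Rightarrow> real^'n \<Rightarrow> real^'n" and \<theta>0 :: "real^'n^'m"
  assumes grad_lip: "\<And>i x x'. norm (gf i x - gf i x') \<le> Lg i * dist x x'"
    and Lg_pos: "\<And>i. 0 < Lg i"
  defines "g \<equiv> \<lambda>x. kron_id S (\<chi> i. gf i ((\<theta>0 + kron_id S x) $ i))"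
  shows "norm (g x - g y) \<le> (onorm (\<lambda>v::real^'m. S *v v))\<^sup>2 * Max (range Lg) * norm (x - y)"
proof -
  let ?s = "onorm (\<lambda>v::real^'m. S *v v)"
  let ?L = "Max (range Lg)"
  have s0: "0 \<le> ?s" by (rule onorm_pos_le[OF matrix_vector_mul_bounded_linear])
  have Lmax: "Lg i \<le> ?L" for i by (rule Max_ge) auto
  have L0: "0 \<le> ?L" using Lg_pos[of undefined] Lmax[of undefined] by linarith
  define a where "a = \<theta>0 + kron_id S x"
  define b where "b = \<theta>0 + kron_id S y"
  have lin: "kron_id S u - kron_id S v = kron_id S (u - v)" for u v
    using linear_diff[OF kron_linear] by metis
  have ab: "a - b = kron_id S (x - y)" unfolding a_def b_def by (simp add: lin)
  have "norm ((\<chi> i. gf i (a $ i)) - (\<chi> i. gf i (b $ i))) \<le> ?L * norm (a - b)"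
  proof -
    have "(norm ((\<chi> i. gf i (a $ i)) - (\<chi> i. gf i (b $ i))))\<^sup>2 = (\<Sum>i\<in>UNIV. (norm (gf i (a $ i) - gf i (b $ i)))\<^sup>2)"
      by (simp add: norm_vec_sq)
    also have "\<dots> \<le> (\<Sum>i\<in>UNIV. (?L * norm ((a - b) $ i))\<^sup>2)"
    proof (intro sum_mono power_mono)
      fix i
      have "norm (gf i (a $ i) - gf i (b $ i)) \<le> Lg i * norm ((a - b) $ i)"
        using grad_lip[of i "a $ i" "b $ i"] by (simp add: dist_norm)
      also have "\<dots> \<le> ?L * norm ((a - b) $ i)" using Lmax[of i] by (intro mult_right_mono) auto
      finally show "norm (gf i (a $ i) - gf i (b $ i)) \<le> ?L * norm ((a - b) $ i)" .
    qed auto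
    also have "\<dots> = (?L * norm (a - b))\<^sup>2"
      by (simp add: power_mult_distrib norm_vec_sq[of "a - b"] sum_distrib_left)
    finally show ?thesis using L0 by (simp add: power2_le_iff_abs_le)
  qed
  hence "norm (g x - g y) \<le> ?s * (?L * norm (a - b))"
    using kron_norm[of S "(\<chi> i. gf i (a $ i)) - (\<chi> i. gf i (b $ i))"] s0
    unfolding g_def a_def[symmetric] b_def[symmetric] lin
    by (meson mult_left_mono order_trans)
  also have "\<dots> \<le> ?s * (?L * (?s * norm (x - y)))"
    unfolding ab using s0 L0 kron_norm[of S "x - y"] by (intro mult_left_mono) auto
  finally show ?thesis by (simp add: power2_eq_square mult_ac)
qed




lemma prod_Basis_vec:
  "(\<Prod>b\<in>(Basis :: ('a::euclidean_space^'k) set). H b) = (\<Prod>i\<in>UNIV. \<Prod>u\<in>Basis. H (axis i u))"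
proof -
  have B: "(Basis :: ('a^'k) set) = (\<lambda>(i,u). axis i u) ` (UNIV \<times> Basis)"
    unfolding Basis_vec_def by auto
  have inj: "inj_on (\<lambda>(i,u). axis i u :: 'a^'k) (UNIV \<times> Basis)"
    by (auto simp: inj_on_def axis_eq_axis nonzero_Basis)
  show ?thesis
    unfolding B prod.reindex[OF inj] by (simp add: prod.cartesian_product split_def)
qed

lemma prod_Basis_vec2:
  fixes x :: "real^'n^'m"
  shows "(\<Prod>b\<in>Basis. H (x \<bullet> b)) = (\<Prod>i\<in>UNIV. \<Prod>j\<in>UNIV. H (x $ i $ j))"
  by (simp add: prod_Basis_vec inner_axis)

lemma normal_mgf1:
  assumes \<sigma>: "0 < \<sigma>"
  shows "(\<integral>\<^sup>+y. ennreal (normal_density 0 \<sigma> y * exp (y\<^sup>2 / (4*\<sigma>\<^sup>2))) \<partial>lborel) = ennreal (sqrt 2)"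
proof -
  have eq: "normal_density 0 \<sigma> y * exp (y\<^sup>2 / (4*\<sigma>\<^sup>2)) = sqrt 2 * normal_density 0 (sqrt 2 * \<sigma>) y" for y
  proof -
    have e: "exp (-(y - 0)\<^sup>2/ (2 * \<sigma>\<^sup>2)) * exp (y\<^sup>2 / (4*\<sigma>\<^sup>2)) = exp (-(y - 0)\<^sup>2/ (2 * (sqrt 2 * \<sigma>)\<^sup>2))"
      unfolding exp_add[symmetric] using \<sigma> by (simp add: power_mult_distrib field_simps)
    have s: "1 / sqrt (2 * pi * \<sigma>\<^sup>2) = sqrt 2 * (1 / sqrt (2 * pi * (sqrt 2 * \<sigma>)\<^sup>2))"
      using \<sigma> by (simp add: power_mult_distrib real_sqrt_mult field_simps)
    show ?thesis unfolding normal_density_def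
      by (metis (no_types, lifting) e s mult.assoc)
  qed
  have "(\<integral>\<^sup>+y. ennreal (normal_density 0 \<sigma> y * exp (y\<^sup>2 / (4*\<sigma>\<^sup>2))) \<partial>lborel)
      = (\<integral>\<^sup>+y. ennreal (sqrt 2) * ennreal (normal_density 0 (sqrt 2 * \<sigma>) y) \<partial>lborel)"
    by (simp add: eq ennreal_mult)
  also have "\<dots> = ennreal (sqrt 2) * (\<integral>\<^sup>+y. ennreal (normal_density 0 (sqrt 2 * \<sigma>) y) \<partial>lborel)"
    by (rule nn_integral_cmult) simp
  also have "(\<integral>\<^sup>+y. ennreal (normal_density 0 (sqrt 2 * \<sigma>) y) \<partial>lborel) = 1"
    using \<sigma> by (subst nn_integral_eq_integral) (auto intro!: integrable_normal_density simp: integral_normal_density)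
  finally show ?thesis by simp
qed

lemma gauss_mgf:
  assumes \<sigma>: "0 < \<sigma>"
  shows "(\<integral>\<^sup>+x. ennreal (exp ((norm x)\<^sup>2 / (4*\<sigma>\<^sup>2))) \<partial>(gauss \<sigma> :: (real^'n^'m) measure))
     = ennreal (sqrt 2 ^ (CARD('m) * CARD('n)))"
proof -
  let ?h = "\<lambda>y. normal_density 0 \<sigma> y * exp (y\<^sup>2 / (4*\<sigma>\<^sup>2))"
  have "(\<integral>\<^sup>+x. ennreal (exp ((norm x)\<^sup>2 / (4*\<sigma>\<^sup>2))) \<partial>(gauss \<sigma> :: (real^'n^'m) measure))
     = (\<integral>\<^sup>+x. ennreal (\<Prod>i\<in>UNIV. \<Prod>j\<in>UNIV. normal_density 0 \<sigma> (x $ i $ j)) * ennreal (exp ((norm x)\<^sup>2 / (4*\<sigma>\<^sup>2))) \<partial>(lborel :: (real^'n^'m) measure))"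
  proof -
    have m: "(\<lambda>x::real^'n^'m. \<Prod>i\<in>UNIV. \<Prod>j\<in>UNIV. normal_density 0 \<sigma> (x $ i $ j)) \<in> borel_measurable borel"
      by (intro borel_measurable_continuous_onI) (use \<sigma> in \<open>auto intro!: continuous_intros simp: normal_density_def\<close>)
    show ?thesis unfolding gauss_def by (rule nn_integral_density) (use m in auto)
  qed
  also have "\<dots> = (\<integral>\<^sup>+x. (\<Prod>b\<in>Basis. ennreal (?h (x \<bullet> b))) \<partial>(lborel :: (real^'n^'m) measure))"
  proof (intro nn_integral_cong)
    fix x :: "real^'n^'m"
    have n: "(norm x)\<^sup>2 = (\<Sum>i\<in>UNIV. \<Sum>j\<in>UNIV. (x $ i $ j)\<^sup>2)"
      unfolding power2_norm_eq_inner inner_vec_def by (simp add: power2_eq_square)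
    have "ennreal (\<Prod>i\<in>UNIV. \<Prod>j\<in>UNIV. normal_density 0 \<sigma> (x $ i $ j)) * ennreal (exp ((norm x)\<^sup>2 / (4*\<sigma>\<^sup>2)))
        = ennreal ((\<Prod>i\<in>UNIV. \<Prod>j\<in>UNIV. normal_density 0 \<sigma> (x $ i $ j)) * (\<Prod>i\<in>UNIV. \<Prod>j\<in>UNIV. exp ((x $ i $ j)\<^sup>2 / (4*\<sigma>\<^sup>2))))"
      by (simp add: ennreal_mult'' prod_nonneg n sum_divide_distrib exp_sum)
    also have "\<dots> = ennreal (\<Prod>i\<in>UNIV. \<Prod>j\<in>UNIV. ?h (x $ i $ j))"
      by (simp add: prod.distrib)
    also have "\<dots> = ennreal (\<Prod>b\<in>Basis. ?h (x \<bullet> b))"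
    proof -
      have pb: "(\<Prod>b\<in>(Basis :: (real^'n^'m) set). ?h (x \<bullet> b)) = (\<Prod>i\<in>UNIV. \<Prod>j\<in>UNIV. ?h (x $ i $ j))"
        by (rule prod_Basis_vec2)
      show ?thesis using pb by simp
    qed
    also have "\<dots> = (\<Prod>b\<in>Basis. ennreal (?h (x \<bullet> b)))"
      by (simp add: prod_ennreal)
    finally show "ennreal (\<Prod>i\<in>UNIV. \<Prod>j\<in>UNIV. normal_density 0 \<sigma> (x $ i $ j)) * ennreal (exp ((norm x)\<^sup>2 / (4*\<sigma>\<^sup>2)))
        = (\<Prod>b\<in>Basis. ennreal (?h (x \<bullet> b)))" .
  qed
  also have "\<dots> = (\<Prod>b\<in>(Basis :: (real^'n^'m) set). \<integral>\<^sup>+y. ennreal (?h y) \<partial>lborel)"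
    by (rule nn_integral_lborel_prod) auto
  also have "\<dots> = ennreal (sqrt 2) ^ card (Basis :: (real^'n^'m) set)"
    by (simp add: normal_mgf1[OF \<sigma>])
  also have "\<dots> = ennreal (sqrt 2 ^ (CARD('m) * CARD('n)))"
    by (simp add: ennreal_power)
  finally show ?thesis .
qed




lemma tail_bound:
  fixes M :: "'a measure" and ny :: "nat \<Rightarrow> 'a \<Rightarrow> real^'n^'m"
  assumes M_prob: "prob_space M"
    and ny_indep: "prob_space.indep_vars M (\<lambda>_. borel) ny UNIV"
    and ny_law: "\<And>k. distr M borel (ny k) = gauss \<sigma>"
    and \<sigma>: "0 < \<sigma>" and N2: "2 \<le> CARD('m) * CARD('n)" and \<rho>: "0 \<le> \<rho>"
  shows "measure M {\<omega>\<in>space M. 2 * real (CARD('m) * CARD('n)) * \<sigma>\<^sup>2 * (real r + \<rho>) \<le> (\<Sum>k<r. (norm (ny (t0+k) \<omega>))\<^sup>2)} \<le> exp (-\<rho>)"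
proof -
  interpret P: prob_space M by (rule M_prob)
  define N where "N = CARD('m) * CARD('n)"
  define s where "s = 1 / (4 * \<sigma>\<^sup>2)"
  define B where "B = 2 * real N * \<sigma>\<^sup>2 * (real r + \<rho>)"
  define W where "W \<omega> = (\<Sum>k<r. (norm (ny (t0+k) \<omega>))\<^sup>2)" for \<omega>
  define I where "I = (\<lambda>k. t0 + k) ` {..<r}"
  have s0: "0 < s" using \<sigma> by (simp add: s_def)
  have rv: "ny k \<in> borel_measurable M" for k
    using ny_indep unfolding P.indep_vars_def by auto
  have Wm: "W \<in> borel_measurable M" unfolding W_def using rv by measurable
  have "emeasure M {\<omega>\<in>space M. B \<le> W \<omega>} \<le> ennreal (exp (-s * B)) * (\<integral>\<^sup>+\<omega>. ennreal (exp (s * W \<omega>)) * indicator (space M) \<omega> \<partial>M)"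
    by (rule Chernoff_ineq_nn_integral_ge[OF s0]) (use Wm in auto)
  also have "(\<integral>\<^sup>+\<omega>. ennreal (exp (s * W \<omega>)) * indicator (space M) \<omega> \<partial>M)
      = (\<integral>\<^sup>+\<omega>. (\<Prod>k\<in>I. ennreal (exp (s * (norm (ny k \<omega>))\<^sup>2))) \<partial>M)"
  proof (intro nn_integral_cong)
    fix \<omega> assume "\<omega> \<in> space M"
    have "exp (s * W \<omega>) = (\<Prod>k<r. exp (s * (norm (ny (t0+k) \<omega>))\<^sup>2))"
      by (simp add: W_def sum_distrib_left exp_sum)
    also have "\<dots> = (\<Prod>k\<in>I. exp (s * (norm (ny k \<omega>))\<^sup>2))"
      unfolding I_def by (subst prod.reindex) (auto simp: inj_on_def)
    finally show "ennreal (exp (s * W \<omega>)) * indicator (space M) \<omega> = (\<Prod>k\<in>I. ennreal (exp (s * (norm (ny k \<omega>))\<^sup>2)))"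
      using \<open>\<omega> \<in> space M\<close> by (simp add: prod_ennreal)
  qed
  also have "\<dots> = (\<Prod>k\<in>I. \<integral>\<^sup>+\<omega>. ennreal (exp (s * (norm (ny k \<omega>))\<^sup>2)) \<partial>M)"
  proof (rule P.indep_vars_nn_integral)
    show "finite I" unfolding I_def by simp
    have "P.indep_vars (\<lambda>_. borel) ny I" by (rule P.indep_vars_subset[OF ny_indep]) auto
    thus "P.indep_vars (\<lambda>_. borel) (\<lambda>k \<omega>. ennreal (exp (s * (norm (ny k \<omega>))\<^sup>2))) I"
      by (rule P.indep_vars_compose2[where X=ny]) auto
  qed auto
  also have "\<dots> = (\<Prod>k\<in>I. ennreal (sqrt 2 ^ N))"
  proof (intro prod.cong refl)
    fix k
    have "(\<integral>\<^sup>+\<omega>. ennreal (exp (s * (norm (ny k \<omega>))\<^sup>2)) \<partial>M) = (\<integral>\<^sup>+x. ennreal (exp (s * (norm x)\<^sup>2)) \<partial>distr M borel (ny k))"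
      by (subst nn_integral_distr) (use rv in auto)
    also have "\<dots> = (\<integral>\<^sup>+x. ennreal (exp ((norm x)\<^sup>2 / (4*\<sigma>\<^sup>2))) \<partial>(gauss \<sigma> :: (real^'n^'m) measure))"
      by (simp add: ny_law s_def)
    also have "\<dots> = ennreal (sqrt 2 ^ N)" unfolding N_def by (rule gauss_mgf[OF \<sigma>])
    finally show "(\<integral>\<^sup>+\<omega>. ennreal (exp (s * (norm (ny k \<omega>))\<^sup>2)) \<partial>M) = ennreal (sqrt 2 ^ N)" .
  qed
  also have "\<dots> = ennreal (sqrt 2 ^ (N * r))"
  proof -
    have "card I = r" unfolding I_def by (subst card_image) (auto simp: inj_on_def)
    thus ?thesis by (simp add: power_mult ennreal_power)
  qed
  also have "ennreal (exp (-s * B)) * ennreal (sqrt 2 ^ (N * r)) = ennreal (exp (-s * B) * sqrt 2 ^ (N * r))"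
    by (simp add: ennreal_mult)
  finally have E: "emeasure M {\<omega>\<in>space M. B \<le> W \<omega>} \<le> ennreal (exp (-s * B) * sqrt 2 ^ (N * r))" .
  have "exp (-s * B) * sqrt 2 ^ (N * r) \<le> exp (-s * B) * exp (1/2) ^ (N * r)"
  proof (intro mult_left_mono power_mono)
    have "(sqrt 2)\<^sup>2 \<le> (exp (1/2))\<^sup>2"
    proof -
      have "(exp (1/2::real))\<^sup>2 = exp 1" by (simp add: power2_eq_square exp_add[symmetric])
      moreover have "2 \<le> exp (1::real)" using exp_ge_add_one_self[of 1] by simp
      ultimately show ?thesis by simp
    qed
    thus "sqrt 2 \<le> exp (1/2)" by (rule power2_le_imp_le) simp
  qed auto
  also have "\<dots> = exp (- (real N * \<rho> / 2))"
    using \<sigma> by (simp add: s_def B_def exp_of_nat_mult[symmetric] exp_add[symmetric] field_simps power2_eq_square)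
  also have "\<dots> \<le> exp (-\<rho>)"
  proof -
    have "2 \<le> real N" using N2 unfolding N_def by linarith
    hence "2 * \<rho> \<le> real N * \<rho>" using \<rho> by (rule mult_right_mono)
    thus ?thesis by simp
  qed
  finally have "exp (-s * B) * sqrt 2 ^ (N * r) \<le> exp (-\<rho>)" .
  with E have "emeasure M {\<omega>\<in>space M. B \<le> W \<omega>} \<le> ennreal (exp (-\<rho>))"
    using ennreal_leI order_trans by blast
  thus ?thesis unfolding B_def W_def N_def
    by (simp add: P.emeasure_eq_measure)
qed



theorem lemma4:
  fixes E :: "'m::finite \<Rightarrow> 'm \<Rightarrow> bool"
    and S :: "real^'m^'m"
    and f :: "'m \<Rightarrow> real^'n::finite \<Rightarrow> real"
    and gf :: "'m \<Rightarrow> real^'n \<Rightarrow> real^'n"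
    and Hf :: "'m \<Rightarrow> real^'n \<Rightarrow> real^'n^'n"
    and Lg LH :: "'m \<Rightarrow> real"
    and \<sigma> \<rho> :: real
    and \<theta>0 x0 :: "real^'n^'m"
    and \<Psi> :: "real^'n^'m \<Rightarrow> real"
    and g\<Psi> :: "real^'n^'m \<Rightarrow> real^'n^'m"
    and H\<Psi> :: "real^'n^'m \<Rightarrow> real^'n^'m"
    and e\<alpha> :: "real^'n^'m" and lam :: real
    and Lg\<Psi> LH\<Psi> \<alpha> d ls :: real and r :: nat
    and M :: "'a measure"
    and ny nz y z :: "nat \<Rightarrow> 'a \<Rightarrow> real^'n^'m"
    and t0 :: nat
  assumes m2: "CARD('m) \<ge> 2"
    and E_sym: "\<And>i j. E i j = E j i" and E_irrefl: "\<And>i. \<not> E i i"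
    and S_sym: "transpose S = S"
    and S_psd: "\<And>v. 0 \<le> v \<bullet> (S *v v)"
    and S_sq: "S ** S = graph_laplacian E"
    and f_smooth: "\<And>i. smooth_fun (f i)"
    and f_grad: "\<And>i x. (f i has_derivative (\<lambda>h. gf i x \<bullet> h)) (at x)"
    and f_hess: "\<And>i x. (gf i has_derivative (\<lambda>h. Hf i x *v h)) (at x)"
    and Lg_pos: "\<And>i. 0 < Lg i" and LH_pos: "\<And>i. 0 < LH i"
    and grad_lip: "\<And>i x x'. norm (gf i x - gf i x') \<le> Lg i * dist x x'"
    and hess_lip: "\<And>i x x'. onorm (\<lambda>h. (Hf i x - Hf i x') *v h) \<le> LH i * dist x x'"
    and \<sigma>_pos: "0 < \<sigma>"
    and \<rho>_ge: "1 \<le> \<rho>"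
    and \<Psi>_def: "\<Psi> = (\<lambda>x. \<Sum>i\<in>UNIV. f i ((\<theta>0 + kron_id S x) $ i))"
    and \<Psi>_grad: "\<And>x. (\<Psi> has_derivative (\<lambda>h. g\<Psi> x \<bullet> h)) (at x)"
    and \<Psi>_hess: "(g\<Psi> has_derivative H\<Psi>) (at x0)"
    and e\<alpha>_unit: "norm e\<alpha> = 1"
    and e\<alpha>_eig: "H\<Psi> e\<alpha> = lam *\<^sub>R e\<alpha>"
    and lam_min: "\<And>\<mu> v. v \<noteq> 0 \<Longrightarrow> H\<Psi> v = \<mu> *\<^sub>R v \<Longrightarrow> lam \<le> \<mu>"
    and Lg\<Psi>_def: "Lg\<Psi> = (onorm (\<lambda>v::real^'m. S *v v))\<^sup>2 * Max (range Lg)"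
    and LH\<Psi>_def: "LH\<Psi> = (onorm (\<lambda>v::real^'m. S *v v)) ^ 3 * Max (range LH)"
    and \<alpha>_def: "\<alpha> = 1 / (Lg\<Psi> * \<rho> ^ 7)"
    and d_def: "d = \<sigma> / (20 * LH\<Psi> * \<rho>\<^sup>2)"
    and r_def: "r = nat \<lceil>\<rho> / sqrt \<alpha>\<rceil>"
    and ls_def: "ls = d\<^sup>2 / (4 * \<alpha> * real r)
        - 2 * real (CARD('m) * CARD('n)) * \<alpha> * \<sigma>\<^sup>2 * (real r + sqrt (real r * \<rho>) + \<rho>)"
    and M_prob: "prob_space M"
    and ny_indep: "prob_space.indep_vars M (\<lambda>_. borel) ny UNIV"
    and nz_indep: "prob_space.indep_vars M (\<lambda>_. borel) nz UNIV"
    and ny_law: "\<And>k. distr M borel (ny k) = gauss \<sigma>"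
    and nz_law: "\<And>k. distr M borel (nz k) = gauss \<sigma>"
    and coupl_span: "\<And>k \<omega>. \<omega> \<in> space M \<Longrightarrow> ny k \<omega> - nz k \<omega> \<in> span {e\<alpha>}"
    and coupl_refl: "\<And>k \<omega>. \<omega> \<in> space M \<Longrightarrow> e\<alpha> \<bullet> ny k \<omega> = - (e\<alpha> \<bullet> nz k \<omega>)"
    and y0: "\<And>\<omega>. y 0 \<omega> = x0" and z0: "\<And>\<omega>. z 0 \<omega> = x0"
    and y_step: "\<And>k \<omega>. y (Suc k) \<omega> = y k \<omega> - \<alpha> *\<^sub>R (g\<Psi> (y k \<omega>) + ny k \<omega>)"
    and z_step: "\<And>k \<omega>. z (Suc k) \<omega> = z k \<omega> - \<alpha> *\<^sub>R (g\<Psi> (z k \<omega>) + nz k \<omega>)"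
  shows "measure M {\<omega> \<in> space M.
           (\<exists>\<tau>\<in>{1..r}. min (\<Psi> (y (t0 + \<tau>) \<omega>) - \<Psi> (y t0 \<omega>))
                               (\<Psi> (z (t0 + \<tau>) \<omega>) - \<Psi> (z t0 \<omega>)) \<le> - ls)
         \<or> (\<forall>\<tau>\<in>{1..r}. max (norm (y (t0 + \<tau>) \<omega> - y t0 \<omega>))
                               (norm (z (t0 + \<tau>) \<omega> - z t0 \<omega>)) \<le> d)}
         \<ge> 1 - 8 * real r * exp (- \<rho>)"
  proof -
  interpret P: prob_space M by (rule M_prob)
  define N where "N = CARD('m) * CARD('n)"
  define Bd where "Bd = 2 * real N * \<sigma>\<^sup>2 * (real r + \<rho>)"
  define Wy where "Wy \<omega> = (\<Sum>k<r. (norm (ny (t0+k) \<omega>))\<^sup>2)" for \<omega>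
  let ?T = "{\<omega> \<in> space M.
           (\<exists>\<tau>\<in>{1..r}. min (\<Psi> (y (t0 + \<tau>) \<omega>) - \<Psi> (y t0 \<omega>))
                               (\<Psi> (z (t0 + \<tau>) \<omega>) - \<Psi> (z t0 \<omega>)) \<le> - ls)
         \<or> (\<forall>\<tau>\<in>{1..r}. max (norm (y (t0 + \<tau>) \<omega> - y t0 \<omega>))
                               (norm (z (t0 + \<tau>) \<omega> - z t0 \<omega>)) \<le> d)}"
  show ?thesis
  proof (cases "r = 0")
    case True
    then have "?T = space M" by auto
    thus ?thesis using True by (simp add: P.prob_space)
  next
    case False
    have s0: "0 \<le> onorm (\<lambda>v::real^'m. S *v v)"
      by (rule onorm_pos_le[OF matrix_vector_mul_bounded_linear])
    have Lmax: "Lg i \<le> Max (range Lg)" for i by (rule Max_ge) auto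
    have LHmax: "LH i \<le> Max (range LH)" for i by (rule Max_ge) auto
    have M1: "0 \<le> Max (range Lg)" using Lg_pos[of undefined] Lmax[of undefined] by linarith
    have M2: "0 \<le> Max (range LH)" using LH_pos[of undefined] LHmax[of undefined] by linarith
    have Lg0: "0 \<le> Lg\<Psi>" unfolding Lg\<Psi>_def
      using M1 by (intro mult_nonneg_nonneg) auto
    have LH0: "0 \<le> LH\<Psi>" unfolding LH\<Psi>_def
      using M2 s0 by (intro mult_nonneg_nonneg) auto
    have \<rho>7: "1 \<le> \<rho> ^ 7" using \<rho>_ge by (simp add: one_le_power)
    have Lpos: "0 < Lg\<Psi>"
    proof (rule ccontr)
      assume "\<not> 0 < Lg\<Psi>"
      hence "Lg\<Psi> = 0" using Lg0 by simp
      hence "r = 0" by (simp add: r_def \<alpha>_def)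
      thus False using False by simp
    qed
    have \<alpha>pos: "0 < \<alpha>" unfolding \<alpha>_def using Lpos \<rho>_ge by (intro divide_pos_pos mult_pos_pos zero_less_power) auto
    have L\<alpha>: "Lg\<Psi> * \<alpha> \<le> 1" 
    proof -
      have "Lg\<Psi> * (1 / (Lg\<Psi> * \<rho> ^ 7)) = 1 / \<rho> ^ 7" using Lpos by simp
      moreover have "1 / \<rho> ^ 7 \<le> 1" using \<rho>7 \<rho>_ge by (simp add: divide_le_eq_1)
      ultimately show ?thesis unfolding \<alpha>_def by simp
    qed
    have gform: "\<And>x. g\<Psi> x = kron_id S (\<chi> i. gf i ((\<theta>0 + kron_id S x) $ i))"
      by (rule grad_formula[OF S_sym f_grad \<Psi>_def \<Psi>_grad])
    have lip: "\<And>x y. norm (g\<Psi> x - g\<Psi> y) \<le> Lg\<Psi> * norm (x - y)"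
    proof -
      fix x y
      have "norm (kron_id S (\<chi> i. gf i ((\<theta>0 + kron_id S x) $ i)) - kron_id S (\<chi> i. gf i ((\<theta>0 + kron_id S y) $ i)))
         \<le> (onorm (\<lambda>v::real^'m. S *v v))\<^sup>2 * Max (range Lg) * norm (x - y)"
        by (rule grad_lip_lemma[where gf=gf and Lg=Lg, OF grad_lip Lg_pos])
      thus "norm (g\<Psi> x - g\<Psi> y) \<le> Lg\<Psi> * norm (x - y)"
        unfolding Lg\<Psi>_def by (simp only: gform)
    qed
    have desc: "\<And>a b. \<Psi> b \<le> \<Psi> a + g\<Psi> a \<bullet> (b - a) + Lg\<Psi>/2 * (norm (b-a))\<^sup>2"
      by (rule descent[OF \<Psi>_grad lip])
    have nz_norm: "norm (nz k \<omega>) = norm (ny k \<omega>)" if \<omega>: "\<omega> \<in> space M" for k \<omega>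
    proof -
      obtain c where c: "ny k \<omega> - nz k \<omega> = c *\<^sub>R e\<alpha>"
        using coupl_span[OF \<omega>, of k] by (auto simp: span_singleton)
      have ee: "e\<alpha> \<bullet> e\<alpha> = 1" using e\<alpha>_unit by (simp add: norm_eq_sqrt_inner)
      have nz: "nz k \<omega> = ny k \<omega> - c *\<^sub>R e\<alpha>" using c by (simp add: algebra_simps)
      have "e\<alpha> \<bullet> nz k \<omega> = e\<alpha> \<bullet> ny k \<omega> - c" unfolding nz by (simp add: inner_diff_right ee)
      hence cc: "c = 2 * (e\<alpha> \<bullet> ny k \<omega>)" using coupl_refl[OF \<omega>, of k] by simp
      have "(norm (nz k \<omega>))\<^sup>2 = (norm (ny k \<omega>))\<^sup>2"
        unfolding nz power2_norm_eq_inner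
        by (simp add: inner_diff_left inner_diff_right inner_commute ee cc algebra_simps)
      thus ?thesis by simp
    qed
    have N2: "2 \<le> CARD('m) * CARD('n)"
    proof -
      have "1 \<le> CARD('n)" by (simp add: Suc_le_eq)
      hence a: "CARD('m) * 1 \<le> CARD('m) * CARD('n)" by (rule mult_left_mono) simp
      show ?thesis using m2 a by linarith
    qed
    have tb: "measure M {\<omega>\<in>space M. Bd \<le> Wy \<omega>} \<le> exp (-\<rho>)"
      using tail_bound[OF M_prob ny_indep ny_law \<sigma>_pos N2, of \<rho> r t0] \<rho>_ge
      by (simp add: Bd_def Wy_def N_def)
    have d0: "0 \<le> d" unfolding d_def using LH0 \<sigma>_pos by simp
    have rpos: "0 < real r" using False by simp
    have dsq: "4*\<alpha>*real r*ls + 4*\<alpha>\<^sup>2*real r*Bd \<le> d\<^sup>2"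
    proof -
      define Q where "Q = real r + sqrt (real r * \<rho>) + \<rho>"
      have ls': "4*\<alpha>*real r*ls = d\<^sup>2 - 8 * real N * \<alpha>\<^sup>2 * \<sigma>\<^sup>2 * real r * Q"
        unfolding ls_def Q_def N_def using \<alpha>pos rpos by (simp add: field_simps power2_eq_square)
      have "real r + \<rho> \<le> Q" unfolding Q_def using \<rho>_ge by simp
      hence "8 * real N * \<alpha>\<^sup>2 * \<sigma>\<^sup>2 * real r * (real r + \<rho>) \<le> 8 * real N * \<alpha>\<^sup>2 * \<sigma>\<^sup>2 * real r * Q"
        using rpos by (intro mult_left_mono) auto
      thus ?thesis unfolding ls' Bd_def by (simp add: algebra_simps)
    qed
    have chain: "norm (u \<tau> - u 0) \<le> d"
      if step: "\<And>k. u (Suc k) = u k - \<alpha> *\<^sub>R (g\<Psi> (u k) + w k)"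
        and noA: "\<forall>\<tau>\<in>{1..r}. \<Psi> (u \<tau>) - \<Psi> (u 0) > - ls"
        and W: "(\<Sum>k<r. (norm (w k))\<^sup>2) \<le> Bd" and \<tau>: "\<tau> \<in> {1..r}" for u w \<tau>
    proof -
      have "(norm (u \<tau> - u 0))\<^sup>2 \<le> 4*\<alpha>*real r*ls + 4*\<alpha>\<^sup>2*real r*Bd"
        by (rule det_chain[OF desc \<alpha>pos L\<alpha> Lg0 step noA W \<tau>])
      also have "\<dots> \<le> d\<^sup>2" by (rule dsq)
      finally show ?thesis using d0 by (rule power2_le_imp_le)
    qed
    have sub: "{\<omega>\<in>space M. \<not> Bd \<le> Wy \<omega>} \<subseteq> ?T"
    proof
      fix \<omega> assume "\<omega> \<in> {\<omega>\<in>space M. \<not> Bd \<le> Wy \<omega>}"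
      hence \<omega>: "\<omega> \<in> space M" and Wl: "Wy \<omega> \<le> Bd" by auto
      have Wz: "(\<Sum>k<r. (norm (nz (t0+k) \<omega>))\<^sup>2) \<le> Bd"
        using Wl unfolding Wy_def by (simp add: nz_norm[OF \<omega>])
      show "\<omega> \<in> ?T"
      proof (cases "\<exists>\<tau>\<in>{1..r}. min (\<Psi> (y (t0 + \<tau>) \<omega>) - \<Psi> (y t0 \<omega>))
                               (\<Psi> (z (t0 + \<tau>) \<omega>) - \<Psi> (z t0 \<omega>)) \<le> - ls")
        case True thus ?thesis using \<omega> by blast
      next
        case nA: False
        have ny: "\<forall>\<tau>\<in>{1..r}. \<Psi> (y (t0 + \<tau>) \<omega>) - \<Psi> (y (t0 + 0) \<omega>) > - ls"
          using nA by auto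
        have nz: "\<forall>\<tau>\<in>{1..r}. \<Psi> (z (t0 + \<tau>) \<omega>) - \<Psi> (z (t0 + 0) \<omega>) > - ls"
          using nA by auto
        have "max (norm (y (t0 + \<tau>) \<omega> - y t0 \<omega>)) (norm (z (t0 + \<tau>) \<omega> - z t0 \<omega>)) \<le> d"
          if \<tau>: "\<tau> \<in> {1..r}" for \<tau>
        proof -
          have "norm ((\<lambda>k. y (t0 + k) \<omega>) \<tau> - (\<lambda>k. y (t0 + k) \<omega>) 0) \<le> d"
            by (rule chain[of "\<lambda>k. y (t0 + k) \<omega>" "\<lambda>k. ny (t0 + k) \<omega>", OF _ ny _ \<tau>])
               (use Wl in \<open>simp_all add: y_step Wy_def\<close>)
          moreover have "norm ((\<lambda>k. z (t0 + k) \<omega>) \<tau> - (\<lambda>k. z (t0 + k) \<omega>) 0) \<le> d"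
            by (rule chain[of "\<lambda>k. z (t0 + k) \<omega>" "\<lambda>k. nz (t0 + k) \<omega>", OF _ nz Wz \<tau>])
               (simp add: z_step)
          ultimately show ?thesis by simp
        qed
        thus ?thesis using \<omega> by blast
      qed
    qed
    have rv: "ny k \<in> borel_measurable M" for k
      using ny_indep unfolding P.indep_vars_def by auto
    have rvz: "nz k \<in> borel_measurable M" for k
      using nz_indep unfolding P.indep_vars_def by auto
    have gcont: "continuous_on UNIV g\<Psi>"
    proof (rule lipschitz_on_continuous_on)
      show "Lg\<Psi>-lipschitz_on UNIV g\<Psi>"
        by (rule lipschitz_onI) (use lip Lg0 in \<open>auto simp: dist_norm\<close>)
    qed
    have gm[measurable]: "g\<Psi> \<in> borel_measurable borel"
      by (rule borel_measurable_continuous_onI[OF gcont])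
    have Pcont: "continuous_on UNIV \<Psi>"
      using \<Psi>_grad has_derivative_continuous by (blast intro: continuous_at_imp_continuous_on)
    have Pm[measurable]: "\<Psi> \<in> borel_measurable borel"
      by (rule borel_measurable_continuous_onI[OF Pcont])
    have ym[measurable]: "y k \<in> borel_measurable M" for k
    proof (induction k)
      case 0 show ?case by (simp add: y0)
    next
      case (Suc k)
      have "y (Suc k) = (\<lambda>\<omega>. y k \<omega> - \<alpha> *\<^sub>R (g\<Psi> (y k \<omega>) + ny k \<omega>))"
        by (simp add: fun_eq_iff y_step)
      thus ?case using Suc rv by simp
    qed
    have zm[measurable]: "z k \<in> borel_measurable M" for k
    proof (induction k)
      case 0 show ?case by (simp add: z0)
    next
      case (Suc k)
      have "z (Suc k) = (\<lambda>\<omega>. z k \<omega> - \<alpha> *\<^sub>R (g\<Psi> (z k \<omega>) + nz k \<omega>))"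
        by (simp add: fun_eq_iff z_step)
      thus ?case using Suc rvz by simp
    qed
    have Tm: "?T \<in> sets M" by measurable
    have Wm[measurable]: "Wy \<in> borel_measurable M" unfolding Wy_def using rv by measurable
    have "1 - exp (-\<rho>) \<le> 1 - measure M {\<omega>\<in>space M. Bd \<le> Wy \<omega>}" using tb by simp
    also have "\<dots> = measure M (space M - {\<omega>\<in>space M. Bd \<le> Wy \<omega>})"
      by (rule P.prob_compl[symmetric]) measurable
    also have "space M - {\<omega>\<in>space M. Bd \<le> Wy \<omega>} = {\<omega>\<in>space M. \<not> Bd \<le> Wy \<omega>}" by auto
    also have "measure M \<dots> \<le> measure M ?T"
      by (rule P.finite_measure_mono[OF sub Tm])
    finally have "1 - exp (-\<rho>) \<le> measure M ?T" .
    moreover have "1 - 8 * real r * exp (-\<rho>) \<le> 1 - exp (-\<rho>)"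
    proof -
      have "1 \<le> 8 * real r" using False by simp
      hence "1 * exp (-\<rho>) \<le> 8 * real r * exp (-\<rho>)" by (intro mult_right_mono) auto
      thus ?thesis by simp
    qed
    ultimately show ?thesis by linarith
  qed
qed

end
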